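(* Let $Y=y-y_I$ be as in the context. Then \[ \bigl|\mathcal{I}\bigl(\langle\mathcal{A}Y,\mathcal{I}^\alpha\mathcal{A}Y'\rangle\bigr)(T)\bigr|\le C\sum_{j=1}^N\tau_j^\alpha\Bigl[\Bigl(\int_{I_j}\|\mathcal{A}Y'\|\,dt\Bigr)^2+\|\mathcal{A}Y\|_{I_j}^2\Bigr], \] where $\|\mathcal{A}Y\|_{I_j}=\sup_{t\in I_j}\|\mathcal{A}Y(t)\|$.
   Context: $\Omega\subset\mathbb{R}^d$ ($d\le3$) convex polyhedron, $0<\alpha<1$, $\kappa\in W^{1,\infty}(\Omega)$, $\kappa\ge\kappa_{\min}>0$, $\mathcal{A}w=-\nabla\cdot(\kappa\nabla w)$ with homogeneous Dirichlet conditions. $\mathcal{I}g(t)=\int_0^tg(s)\,ds$, $\omega_\beta(t)=t^{\beta-1}/\Gamma(\beta)$, $\mathcal{I}^\beta v(t)=\int_0^t\omega_\beta(t-s)v(s)\,ds$, $(\mathcal{J}_T^\beta w)(t)=\int_t^T\omega_\beta(s-t)w(s)\,ds$, $\partial_t^\alpha v=\mathcal{I}^{1-\alpha}v'$. $\langle\cdot,\cdot\rangle$, $\|\cdot\|$: $L^2(\Omega)$ inner product and norm. $u$ solves $\partial_t^\alpha u+\mathcal{A}u=f$ on $\Omega\times(0,T]$, $u=0$ on $\partial\Omega$, $u(0)=u_0$. Time mesh $t_n=(n\tau)^\gamma$, $0\le n\le N$, $\tau=T^{1/\gamma}/N$, $\gamma\ge1$, $\tau_n=t_n-t_{n-1}$,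 $I_n=(t_{n-1},t_n)$. $U$ is continuous, linear in $t$ on each $\overline{I_n}$, $U(0)=u_0$, with $\frac{1}{\tau_n}\int_{I_n}\partial_t^\alpha U\,dt+\mathcal{A}\tfrac12(U(t_n)+U(t_{n-1}))=\tau_n^{-1}\int_{I_n}f\,dt$; $\eta=u-U$. $\varphi$ solves $-(\mathcal{J}_T^{1-\alpha}\varphi)'+\mathcal{A}\varphi=\eta$ on $(0,T)$, $\varphi(T)=0$, with homogeneous Dirichlet conditions; $y(t)=\varphi(0)+\int_0^t\varphi(s)ds$, $y_I$ is the continuous piecewise-linear interpolant of $y$ at the nodes $t_j$, $Y=y-y_I$. $C$ is a generic constant bounded for $0<\alpha\le1$, independent of $N,\tau$. *)

theory Defs
  imports "HOL-Analysis.Analysis"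
begin

text \<open>Abstract setting: the Hilbert space L2(Omega) is modelled by a real inner product
  space of type 'a; the elliptic operator is a linear map A on it.\<close>

definition rl_kernel :: "real \<Rightarrow> real \<Rightarrow> real" where
  "rl_kernel \<beta> t = t powr (\<beta> - 1) / Gamma \<beta>"

definition rl_int :: "real \<Rightarrow> (real \<Rightarrow> 'a::real_normed_vector) \<Rightarrow> real \<Rightarrow> 'a" where
  "rl_int \<beta> v t = integral {0..t} (\<lambda>s. rl_kernel \<beta> (t - s) *\<^sub>R v s)"

definition prim :: "(real \<Rightarrow> real) \<Rightarrow> real \<Rightarrow> real" where
  "prim g t = integral {0..t} g"

definition mesh :: "real \<Rightarrow> real \<Rightarrow> nat \<Rightarrow> nat \<Rightarrow> real" where
  "mesh T \<gamma> N n = (real n * (T powr (1 / \<gamma>) / real N)) powr \<gamma>"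

definition pl_interp :: "(nat \<Rightarrow> real) \<Rightarrow> (real \<Rightarrow> 'a::real_vector) \<Rightarrow> real \<Rightarrow> 'a" where
  "pl_interp tn y t =
     (let j = (LEAST j. 1 \<le> j \<and> t \<le> tn j)
      in y (tn (j - 1)) + ((t - tn (j - 1)) / (tn j - tn (j - 1))) *\<^sub>R (y (tn j) - y (tn (j - 1))))"

definition ycum :: "(real \<Rightarrow> 'a::real_normed_vector) \<Rightarrow> real \<Rightarrow> 'a" where
  "ycum \<phi> t = \<phi> 0 + integral {0..t} \<phi>"

definition Yerr :: "real \<Rightarrow> real \<Rightarrow> nat \<Rightarrow> (real \<Rightarrow> 'a::real_normed_vector) \<Rightarrow> real \<Rightarrow> 'a" where
  "Yerr T \<gamma> N \<phi> t = ycum \<phi> t - pl_interp (mesh T \<gamma> N) (ycum \<phi>) t"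

end

theory Submission
  imports Defs
begin


definition Om :: "real \<Rightarrow> real \<Rightarrow> real" where
  "Om \<alpha> r = r powr \<alpha> / (\<alpha> * Gamma \<alpha>)"

lemma kernel_has_integral:
  assumes a: "0 < \<alpha>" and "c \<le> a" "a \<le> b"
  shows "((\<lambda>t. rl_kernel \<alpha> (t - c)) has_integral (Om \<alpha> (b - c) - Om \<alpha> (a - c))) {a..b}"
proof -
  have G: "Gamma \<alpha> > 0" using a by (simp add: Gamma_real_pos)
  have G0: "Gamma \<alpha> \<noteq> 0" using less_imp_neq[OF G] by simp
  have "((\<lambda>t. Om \<alpha> (t - c)) has_integral (Om \<alpha> (b - c) - Om \<alpha> (a - c))) {a..b}" if "False" using that by simp
  have "((\<lambda>t. rl_kernel \<alpha> (t - c)) has_integral (Om \<alpha> (b - c) - Om \<alpha> (a - c))) {a..b}"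
  proof (rule fundamental_theorem_of_calculus_interior[where f="\<lambda>t. Om \<alpha> (t - c)"])
    show "a \<le> b" by fact
    show "continuous_on {a..b} (\<lambda>t. Om \<alpha> (t - c))"
    proof -
      have "continuous_on {a..b} (\<lambda>t. (t - c) powr \<alpha>)"
        by (rule continuous_on_powr') (use assms in \<open>auto intro!: continuous_intros\<close>)
      then show ?thesis unfolding Om_def
        by (intro continuous_on_divide continuous_on_const) (use G a in \<open>auto simp del: Gamma_real_pos\<close>)
    qed
    fix t assume t: "t \<in> {a<..<b}"
    then have tc: "t - c > 0" using assms by auto
    have "((\<lambda>t. (t - c) powr \<alpha> / (\<alpha> * Gamma \<alpha>)) has_real_derivative
        (\<alpha> * (t - c) powr (\<alpha> - 1) * 1) / (\<alpha> * Gamma \<alpha>)) (at t)"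
      using tc G0 by (auto intro!: derivative_eq_intros)
    moreover have "(\<alpha> * (t - c) powr (\<alpha> - 1) * 1) / (\<alpha> * Gamma \<alpha>) = rl_kernel \<alpha> (t - c)"
      using a G unfolding rl_kernel_def by (simp add: field_simps)
    ultimately show "((\<lambda>t. Om \<alpha> (t - c)) has_vector_derivative rl_kernel \<alpha> (t - c)) (at t)"
      unfolding Om_def by (simp add: has_real_derivative_iff_has_vector_derivative)
  qed
  then show ?thesis .
qed



lemma hist_bound:
  fixes w w' :: "real \<Rightarrow> real"
  assumes a: "0 < \<alpha>" and a1: "\<alpha> < 1" and ab: "a < b" and bt: "b < t"
    and cw: "continuous_on {a..b} w" and wa: "w a = 0" and wb: "w b = 0"
    and dw: "\<And>s. s \<in> {a<..<b} \<Longrightarrow> (w has_real_derivative w' s) (at s)"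
    and M: "\<And>s. s \<in> {a..b} \<Longrightarrow> \<bar>w s\<bar> \<le> M"
  shows "(\<lambda>s. rl_kernel \<alpha> (t - s) * w' s) integrable_on {a..b}"
    and "\<bar>integral {a..b} (\<lambda>s. rl_kernel \<alpha> (t - s) * w' s)\<bar>
           \<le> M * (rl_kernel \<alpha> (t - b) - rl_kernel \<alpha> (t - a))"
proof -
  have G: "Gamma \<alpha> > 0" using a by (simp add: Gamma_real_pos)
  have G0: "Gamma \<alpha> \<noteq> 0" using less_imp_neq[OF G] by simp
  define c where "c s = (1 - \<alpha>) * (t - s) powr (\<alpha> - 2) / Gamma \<alpha>" for s
  have pos: "t - s > 0" if "s \<in> {a..b}" for s using that bt by auto
  have contk: "continuous_on {a..b} (\<lambda>s. rl_kernel \<alpha> (t - s))"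
    unfolding rl_kernel_def using bt G0
    by (intro continuous_intros) auto
  have contc: "continuous_on {a..b} c"
    unfolding c_def using bt G0
    by (intro continuous_intros) auto
  have dk: "((\<lambda>s. rl_kernel \<alpha> (t - s)) has_real_derivative c s) (at s)" if "s \<in> {a<..<b}" for s
  proof -
    have "t - s > 0" using that bt by auto
    then have "((\<lambda>s. (t - s) powr (\<alpha> - 1) / Gamma \<alpha>) has_real_derivative
        ((\<alpha> - 1) * (t - s) powr (\<alpha> - 1 - 1) * (0 - 1)) / Gamma \<alpha>) (at s)"
      using G0 by (auto intro!: derivative_eq_intros)
    moreover have "((\<alpha> - 1) * (t - s) powr (\<alpha> - 1 - 1) * (0 - 1)) / Gamma \<alpha> = c s"
      unfolding c_def by (simp add: field_simps)
    ultimately show ?thesis unfolding rl_kernel_def by simp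
  qed
  have Ic: "(c has_integral (rl_kernel \<alpha> (t - b) - rl_kernel \<alpha> (t - a))) {a..b}"
    using fundamental_theorem_of_calculus_interior[of a b "\<lambda>s. rl_kernel \<alpha> (t - s)" c] ab contk dk
    by (auto simp: has_real_derivative_iff_has_vector_derivative)
  have dF: "((\<lambda>s. rl_kernel \<alpha> (t - s) * w s) has_vector_derivative
      (c s * w s + rl_kernel \<alpha> (t - s) * w' s)) (at s)" if "s \<in> {a<..<b}" for s
  proof -
    have "((\<lambda>s. rl_kernel \<alpha> (t - s) * w s) has_real_derivative
      (c s * w s + rl_kernel \<alpha> (t - s) * w' s)) (at s)"
      using DERIV_mult[OF dk[OF that] dw[OF that]] by (simp add: mult.commute)
    then show ?thesis by (simp add: has_real_derivative_iff_has_vector_derivative)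
  qed
  have IF: "((\<lambda>s. c s * w s + rl_kernel \<alpha> (t - s) * w' s) has_integral 0) {a..b}"
    using fundamental_theorem_of_calculus_interior[of a b "\<lambda>s. rl_kernel \<alpha> (t - s) * w s", OF _ _ dF] ab continuous_on_mult[OF contk cw] wa wb
    by (auto intro!: continuous_intros)
  have icw: "(\<lambda>s. c s * w s) integrable_on {a..b}"
    by (intro integrable_continuous_interval continuous_intros contc cw)
  have I1: "((\<lambda>s. rl_kernel \<alpha> (t - s) * w' s) has_integral (0 - integral {a..b} (\<lambda>s. c s * w s))) {a..b}"
    using has_integral_diff[OF IF integrable_integral[OF icw]] by simp
  then show "(\<lambda>s. rl_kernel \<alpha> (t - s) * w' s) integrable_on {a..b}" by blast
  have cnn: "c s \<ge> 0" if "s \<in> {a..b}" for s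
    unfolding c_def using a G pos[OF that] by (auto intro!: divide_nonneg_pos mult_nonneg_nonneg) (use assms in simp)
  have "\<bar>integral {a..b} (\<lambda>s. c s * w s)\<bar> \<le> integral {a..b} (\<lambda>s. c s * M)"
  proof -
    have "norm (integral {a..b} (\<lambda>s. c s * w s)) \<le> integral {a..b} (\<lambda>s. c s * M)"
    proof (rule integral_norm_bound_integral[OF icw])
      show "(\<lambda>s. c s * M) integrable_on {a..b}"
        using has_integral_mult_left[OF Ic] by blast
      fix s assume s: "s \<in> {a..b}"
      show "norm (c s * w s) \<le> c s * M"
        using cnn[OF s] M[OF s] by (simp add: abs_mult mult_left_mono)
    qed
    then show ?thesis by simp
  qed
  also have "integral {a..b} (\<lambda>s. c s * M) = M * (rl_kernel \<alpha> (t - b) - rl_kernel \<alpha> (t - a))"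
    using integral_unique[OF has_integral_mult_left[OF Ic, of M]] by simp
  finally show "\<bar>integral {a..b} (\<lambda>s. rl_kernel \<alpha> (t - s) * w' s)\<bar>
           \<le> M * (rl_kernel \<alpha> (t - b) - rl_kernel \<alpha> (t - a))"
    using integral_unique[OF I1] by simp
qed



lemma rl_kernel_nonneg: "0 < \<alpha> \<Longrightarrow> 0 \<le> rl_kernel \<alpha> r"
  unfolding rl_kernel_def by (simp add: Gamma_real_pos less_imp_le)

lemma rl_kernel_0[simp]: "rl_kernel \<alpha> 0 = 0"
  unfolding rl_kernel_def by simp

lemma Om_0[simp]: "Om \<alpha> 0 = 0"
  unfolding Om_def by simp

lemma Om_mono: "0 < \<alpha> \<Longrightarrow> 0 \<le> x \<Longrightarrow> x \<le> y \<Longrightarrow> Om \<alpha> x \<le> Om \<alpha> y"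
  unfolding Om_def by (intro divide_right_mono powr_mono2) (auto simp: Gamma_real_pos less_imp_le)

lemma Om_nonneg: "0 < \<alpha> \<Longrightarrow> 0 \<le> Om \<alpha> x"
  unfolding Om_def by (simp add: Gamma_real_pos less_imp_le)

lemma local_tonelli:
  fixes g :: "real \<Rightarrow> real"
  assumes a: "0 < \<alpha>" and ab: "a < b" and gi: "g integrable_on {a..b}" and gnn: "\<And>s. 0 \<le> g s"
  shows "\<exists>N. negligible N \<and>
     (\<forall>t\<in>{a<..<b} - N. (\<lambda>s. rl_kernel \<alpha> (t - s) * g s) integrable_on {a..t}) \<and>
     (\<lambda>t. integral {a..t} (\<lambda>s. rl_kernel \<alpha> (t - s) * g s)) integrable_on {a..b} \<and>
     integral {a..b} (\<lambda>t. integral {a..t} (\<lambda>s. rl_kernel \<alpha> (t - s) * g s))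
        \<le> Om \<alpha> (b - a) * integral {a..b} g"
proof -
  define Ig where "Ig = integral {a..b} g"
  have hg: "(g has_integral Ig) {a..b}" using gi unfolding Ig_def by (rule integrable_integral)
  have Ignn: "0 \<le> Ig" using has_integral_nonneg[OF hg] gnn by auto
  have meas: "(\<lambda>x. g x * indicator {a..b} x) \<in> borel_measurable lebesgue"
    using has_integral_implies_lebesgue_measurable_real[OF hg] .
  obtain g0 where g0m: "g0 \<in> borel_measurable lborel"
      and g0ae: "AE x in lborel. g x * indicator {a..b} x = g0 x"
    using completion_ex_borel_measurable_real[OF meas] by blast
  define g1 where "g1 x = max 0 (g0 x) * indicator {a..b} x" for x
  have g0b: "g0 \<in> borel_measurable borel" using g0m by simp
  have g1m[measurable]: "g1 \<in> borel_measurable borel"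
    unfolding g1_def using g0b by measurable
  have g1nn: "0 \<le> g1 x" for x unfolding g1_def by (simp add: indicator_def)
  have AEg: "AE x in lborel. g1 x = g x * indicator {a..b} x"
    using g0ae
  proof eventually_elim
    case (elim x)
    then show ?case unfolding g1_def using gnn[of x] by (auto simp: indicator_def)
  qed
  then obtain N1 where N1: "{x \<in> space lborel. \<not> (g1 x = g x * indicator {a..b} x)} \<subseteq> N1"
      "emeasure lborel N1 = 0" "N1 \<in> sets lborel"
    by (rule AE_E)
  have negN1: "negligible N1"
  proof -
    have "N1 \<in> null_sets lborel" using N1 by (auto intro: null_setsI)
    then show ?thesis by (simp add: negligible_iff_null_sets null_sets_completionI)
  qed
  have nng: "(\<integral>\<^sup>+x. ennreal (g1 x) \<partial>lborel) = ennreal Ig"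
  proof -
    have "(\<integral>\<^sup>+x. ennreal (g1 x) \<partial>lborel) = (\<integral>\<^sup>+x. ennreal (indicator {a..b} x * g x) \<partial>lborel)"
      by (rule nn_integral_cong_AE) (use AEg in \<open>auto simp: mult.commute\<close>)
    also have "\<dots> = ennreal Ig"
      by (rule nn_integral_has_integral_lebesgue[OF _ hg]) (use gnn in auto)
    finally show ?thesis .
  qed
  define k where "k t s = (if s < t then rl_kernel \<alpha> (t - s) else 0) * indicator {a..b} t" for t s
  have knn: "0 \<le> k t s" for t s unfolding k_def using rl_kernel_nonneg[OF a] by (simp add: indicator_def)
  have km[measurable]: "(\<lambda>(t, s). k t s) \<in> borel_measurable (lborel \<Otimes>\<^sub>M lborel)"
    unfolding k_def rl_kernel_def by measurable
  define F where "F t s = ennreal (k t s * g1 s)" for t s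
  have Fm: "(\<lambda>(t, s). F t s) \<in> borel_measurable (lborel \<Otimes>\<^sub>M lborel)"
    unfolding F_def by measurable
  define X where "X t = (\<integral>\<^sup>+s. F t s \<partial>lborel)" for t
  have Xm: "X \<in> borel_measurable lborel"
    unfolding X_def using lborel.borel_measurable_nn_integral[OF Fm] by simp
  have fub: "(\<integral>\<^sup>+s. (\<integral>\<^sup>+t. F t s \<partial>lborel) \<partial>lborel) = (\<integral>\<^sup>+t. X t \<partial>lborel)"
    unfolding X_def by (rule lborel_pair.Fubini'[OF Fm])
  have inner: "(\<integral>\<^sup>+t. F t s \<partial>lborel) \<le> ennreal (Om \<alpha> (b - a)) * ennreal (g1 s)" for s
  proof (cases "s \<in> {a..b}")
    case False
    then have "F t s = 0" for t unfolding F_def g1_def by simp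
    then show ?thesis by simp
  next
    case True
    have kk: "k t s = indicator {s..b} t * rl_kernel \<alpha> (t - s)" for t
      using True unfolding k_def by (auto simp: indicator_def)
    have "F t s = ennreal (g1 s) * ennreal (indicator {s..b} t * rl_kernel \<alpha> (t - s))" for t
      unfolding F_def kk using g1nn[of s] rl_kernel_nonneg[OF a]
      by (subst ennreal_mult[symmetric]) (auto simp: mult.commute)
    moreover have km2: "(\<lambda>t. ennreal (indicator {s..b} t * rl_kernel \<alpha> (t - s))) \<in> borel_measurable lborel"
      unfolding rl_kernel_def by measurable
    ultimately have "(\<integral>\<^sup>+t. F t s \<partial>lborel)
        = ennreal (g1 s) * (\<integral>\<^sup>+t. ennreal (indicator {s..b} t * rl_kernel \<alpha> (t - s)) \<partial>lborel)"
      using nn_integral_cmult[OF km2, of "ennreal (g1 s)"] by simp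
    also have "(\<integral>\<^sup>+t. ennreal (indicator {s..b} t * rl_kernel \<alpha> (t - s)) \<partial>lborel)
        = ennreal (Om \<alpha> (b - s) - Om \<alpha> (s - s))"
      by (rule nn_integral_has_integral_lebesgue[OF _ kernel_has_integral[OF a]])
         (use True rl_kernel_nonneg[OF a] in auto)
    also have "\<dots> \<le> ennreal (Om \<alpha> (b - a))"
      using Om_mono[OF a, of "b - s" "b - a"] True by (auto intro: ennreal_leI)
    finally show ?thesis
      by (metis mult.commute mult_left_mono zero_le)
  qed
  have tot: "(\<integral>\<^sup>+t. X t \<partial>lborel) \<le> ennreal (Om \<alpha> (b - a) * Ig)"
  proof -
    have "(\<integral>\<^sup>+t. X t \<partial>lborel) \<le> (\<integral>\<^sup>+s. ennreal (Om \<alpha> (b - a)) * ennreal (g1 s) \<partial>lborel)"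
      unfolding fub[symmetric] by (rule nn_integral_mono) (rule inner)
    also have "\<dots> = ennreal (Om \<alpha> (b - a)) * ennreal Ig"
      by (simp add: nn_integral_cmult nng)
    also have "\<dots> = ennreal (Om \<alpha> (b - a) * Ig)"
      using Om_nonneg[OF a] Ignn by (simp add: ennreal_mult)
    finally show ?thesis .
  qed
  have totfin: "(\<integral>\<^sup>+t. X t \<partial>lborel) \<noteq> \<infinity>"
    using tot by (metis ennreal_less_top infinity_ennreal_def leD)
  have AEX: "AE t in lborel. X t \<noteq> \<infinity>"
    by (rule nn_integral_PInf_AE[OF Xm totfin])
  then obtain N2 where N2: "{x \<in> space lborel. \<not> (X x \<noteq> \<infinity>)} \<subseteq> N2"
      "emeasure lborel N2 = 0" "N2 \<in> sets lborel"
    by (rule AE_E)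
  have negN2: "negligible N2"
  proof -
    have "N2 \<in> null_sets lborel" using N2 by (auto intro: null_setsI)
    then show ?thesis by (simp add: negligible_iff_null_sets null_sets_completionI)
  qed
  define L where "L t = integral {a..t} (\<lambda>s. rl_kernel \<alpha> (t - s) * g s)" for t
  have pt: "((\<lambda>s. rl_kernel \<alpha> (t - s) * g s) has_integral enn2real (X t)) {a..t}"
    if t: "t \<in> {a<..<b} - N2" for t
  proof -
    have Xt: "X t < \<infinity>" using t N2(1) by (auto simp: less_top)
    have m1: "(\<lambda>s. k t s * g1 s) \<in> borel_measurable borel"
      unfolding k_def rl_kernel_def by measurable
    have "((\<lambda>s. k t s * g1 s) has_integral enn2real (X t)) UNIV"
    proof (rule nn_integral_has_integral[OF m1])
      show "0 \<le> k t s * g1 s" for s using knn g1nn by simp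
      show "(\<integral>\<^sup>+s. ennreal (k t s * g1 s) \<partial>lborel) = ennreal (enn2real (X t))"
        using Xt unfolding X_def F_def by simp
      show "0 \<le> enn2real (X t)" by simp
    qed
    moreover have "(\<lambda>s. k t s * g1 s) = (\<lambda>s. if s \<in> {a..t} then rl_kernel \<alpha> (t - s) * g1 s else 0)"
      using t unfolding k_def g1_def by (auto simp: indicator_def fun_eq_iff)
    ultimately have "((\<lambda>s. if s \<in> {a..t} then rl_kernel \<alpha> (t - s) * g1 s else 0) has_integral enn2real (X t)) UNIV"
      by simp
    then have "((\<lambda>s. rl_kernel \<alpha> (t - s) * g1 s) has_integral enn2real (X t)) {a..t}"
      by (rule has_integral_restrict_UNIV[THEN iffD1])
    then show ?thesis
    proof (rule has_integral_spike[OF negN1, rotated])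
      fix s assume s: "s \<in> {a..t} - N1"
      then have "g1 s = g s * indicator {a..b} s" using N1(1) by auto
      then show "rl_kernel \<alpha> (t - s) * g s = rl_kernel \<alpha> (t - s) * g1 s"
        using s t by (auto simp: indicator_def)
    qed
  qed
  define Yf where "Yf t = enn2real (X t)" for t
  have Yfm: "Yf \<in> borel_measurable borel" unfolding Yf_def using Xm by simp
  have "(\<integral>\<^sup>+t. ennreal (Yf t) \<partial>lborel) = (\<integral>\<^sup>+t. X t \<partial>lborel)"
    by (rule nn_integral_cong_AE) (use AEX in \<open>auto simp: Yf_def less_top\<close>)
  also have "\<dots> = ennreal (enn2real (\<integral>\<^sup>+t. X t \<partial>lborel))"
    using totfin by (simp add: less_top)
  finally have "(Yf has_integral enn2real (\<integral>\<^sup>+t. X t \<partial>lborel)) UNIV"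
    by (intro nn_integral_has_integral[OF Yfm]) (auto simp: Yf_def)
  moreover have "Yf = (\<lambda>t. if t \<in> {a..b} then Yf t else 0)"
    unfolding Yf_def X_def F_def k_def by (auto simp: fun_eq_iff)
  ultimately have hY: "(Yf has_integral enn2real (\<integral>\<^sup>+t. X t \<partial>lborel)) {a..b}"
    using has_integral_restrict_UNIV[of "{a..b}" Yf] by metis
  have hL: "(L has_integral enn2real (\<integral>\<^sup>+t. X t \<partial>lborel)) {a..b}"
  proof (rule has_integral_spike[OF _ _ hY])
    show "negligible (N2 \<union> {a, b})" using negN2 by simp
    fix t assume "t \<in> {a..b} - (N2 \<union> {a, b})"
    then have "t \<in> {a<..<b} - N2" by auto
    then show "L t = Yf t" unfolding L_def Yf_def using pt integral_unique by blast
  qed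
  have "enn2real (\<integral>\<^sup>+t. X t \<partial>lborel) \<le> Om \<alpha> (b - a) * Ig"
    using tot Om_nonneg[OF a] Ignn by (simp add: enn2real_leI)
  moreover have "\<forall>t\<in>{a<..<b} - N2. (\<lambda>s. rl_kernel \<alpha> (t - s) * g s) integrable_on {a..t}"
    using pt by blast
  ultimately show ?thesis
    using hL negN2 unfolding L_def Ig_def
    by (intro exI[of _ N2]) (auto simp: integral_unique)
qed


lemma integral_nonneg_any:
  fixes f :: "real \<Rightarrow> real"
  assumes "\<And>x. x \<in> S \<Longrightarrow> 0 \<le> f x"
  shows "0 \<le> integral S f"
  using assms by (cases "f integrable_on S") (auto intro: integral_nonneg simp: not_integrable_integral)

lemma rl_kernel_antimono:
  assumes "0 < \<alpha>" "\<alpha> < 1" "0 < x" "x \<le> y"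
  shows "rl_kernel \<alpha> y \<le> rl_kernel \<alpha> x"
  unfolding rl_kernel_def using assms
  by (intro divide_right_mono powr_mono2') (auto simp: Gamma_real_pos less_imp_le)

lemma sum_intervals_real:
  fixes f :: "real \<Rightarrow> real" and tn :: "nat \<Rightarrow> real"
  assumes mono: "\<And>i j. i \<le> j \<Longrightarrow> tn i \<le> tn j" and fi: "f integrable_on {tn 0..tn n}"
  shows "integral {tn 0..tn n} f = (\<Sum>j=1..n. integral {tn (j - 1)..tn j} f)"
  using fi
proof (induction n)
  case 0
  then show ?case by simp
next
  case (Suc n)
  have sub: "f integrable_on {tn 0..tn n}"
    by (rule integrable_subinterval_real[OF Suc.prems]) (use mono[of 0 n] mono[of n "Suc n"] in auto)
  have "integral {tn 0..tn n} f + integral {tn n..tn (Suc n)} f = integral {tn 0..tn (Suc n)} f"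
    by (rule Henstock_Kurzweil_Integration.integral_combine[OF _ _ Suc.prems]) (use mono in auto)
  then show ?case using Suc.IH[OF sub] by simp
qed

lemma telescope1: "(\<Sum>i=1..n. P i - P (i - 1)) = P n - ((P :: nat \<Rightarrow> real) 0)"
  by (induction n) auto

lemma telescope2: "m \<le> n \<Longrightarrow> (\<Sum>j=Suc m..n. Q j - Q (j - 1)) = Q n - ((Q :: nat \<Rightarrow> real) m)"
proof (induction n)
  case 0
  then show ?case by simp
next
  case (Suc n)
  show ?case
  proof (cases "m = Suc n")
    case True then show ?thesis by simp
  next
    case False
    then have "m \<le> n" using Suc.prems by simp
    then show ?thesis using Suc.IH by simp
  qed
qed



definition Kc :: "real \<Rightarrow> (nat \<Rightarrow> real) \<Rightarrow> nat \<Rightarrow> nat \<Rightarrow> real" where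
  "Kc \<alpha> tn i j = (Om \<alpha> (tn j - tn i) - Om \<alpha> (tn (j - 1) - tn i))
      - (Om \<alpha> (tn j - tn (i - 1)) - Om \<alpha> (tn (j - 1) - tn (i - 1)))"

lemma interval_bound:
  fixes w w' :: "real \<Rightarrow> 'a::real_inner" and tn :: "nat \<Rightarrow> real" and M :: "nat \<Rightarrow> real"
  assumes \<alpha>: "0 < \<alpha>" "\<alpha> < 1" and mono: "\<And>i j. i < j \<Longrightarrow> tn i < tn j" and tn0: "tn 0 = 0"
    and j: "1 \<le> j"
    and cw: "continuous_on {0..tn j} w" and wz: "\<And>i. i \<le> j \<Longrightarrow> w (tn i) = 0"
    and dw: "\<And>i t. 1 \<le> i \<Longrightarrow> i < j \<Longrightarrow> t \<in> {tn (i - 1)<..<tn i} \<Longrightarrow> (w has_vector_derivative w' t) (at t)"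
    and Mb: "\<And>i s. 1 \<le> i \<Longrightarrow> i \<le> j \<Longrightarrow> s \<in> {tn (i - 1)..tn i} \<Longrightarrow> norm (w s) \<le> M i"
    and Mnn: "\<And>i. 0 \<le> M i"
    and gi: "(\<lambda>s. norm (w' s)) integrable_on {tn (j - 1)..tn j}"
    and fi: "(\<lambda>t. inner (w t) (rl_int \<alpha> w' t)) integrable_on {tn (j - 1)..tn j}"
  shows "\<bar>integral {tn (j - 1)..tn j} (\<lambda>t. inner (w t) (rl_int \<alpha> w' t))\<bar>
     \<le> M j * (Om \<alpha> (tn j - tn (j - 1)) * integral {tn (j - 1)..tn j} (\<lambda>s. norm (w' s))
               + (\<Sum>i=1..j - 1. M i * Kc \<alpha> tn i j))"
proof -
  define a where "a = tn (j - 1)"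
  define b where "b = tn j"
  have ab: "a < b" unfolding a_def b_def using mono j by simp
  have monole: "tn i \<le> tn k" if "i \<le> k" for i k
    using mono[of i k] that by (cases "i = k") auto
  have a0: "0 \<le> a" unfolding a_def using monole[of 0 "j - 1"] tn0 by simp
  define f where "f t = inner (w t) (rl_int \<alpha> w' t)" for t
  define g where "g s = norm (w' s)" for s
  obtain N0 where N0: "negligible N0"
    "\<forall>t\<in>{a<..<b} - N0. (\<lambda>s. rl_kernel \<alpha> (t - s) * g s) integrable_on {a..t}"
    "(\<lambda>t. integral {a..t} (\<lambda>s. rl_kernel \<alpha> (t - s) * g s)) integrable_on {a..b}"
    "integral {a..b} (\<lambda>t. integral {a..t} (\<lambda>s. rl_kernel \<alpha> (t - s) * g s))
        \<le> Om \<alpha> (b - a) * integral {a..b} g"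
    using local_tonelli[OF \<alpha>(1) ab, of g] gi unfolding a_def b_def g_def by auto
  define L where "L t = integral {a..t} (\<lambda>s. rl_kernel \<alpha> (t - s) * g s)" for t
  define H where "H t = (\<Sum>i=1..j - 1. M i * (rl_kernel \<alpha> (t - tn i) - rl_kernel \<alpha> (t - tn (i - 1))))" for t
  have Lnn: "0 \<le> L t" for t
    unfolding L_def g_def
    by (rule integral_nonneg_any) (auto intro!: mult_nonneg_nonneg rl_kernel_nonneg[OF \<alpha>(1)])
  have tnia: "tn i \<le> a" if "i \<le> j - 1" for i unfolding a_def using monole[OF that] .
  have Hnn: "0 \<le> H t" if "a < t" for t
    unfolding H_def
  proof (intro sum_nonneg mult_nonneg_nonneg Mnn)
    fix i assume i: "i \<in> {1..j - 1}"
    have "tn (i - 1) \<le> tn i" by (rule monole) simp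
    moreover have "tn i < t" using tnia[of i] i that by auto
    ultimately show "0 \<le> rl_kernel \<alpha> (t - tn i) - rl_kernel \<alpha> (t - tn (i - 1))"
      using rl_kernel_antimono[OF \<alpha>, of "t - tn i" "t - tn (i - 1)"] by simp
  qed
  have Hint: "(H has_integral (\<Sum>i=1..j - 1. M i * Kc \<alpha> tn i j)) {a..b}"
    unfolding H_def
  proof (rule has_integral_sum[OF finite_atLeastAtMost])
    fix i assume i: "i \<in> {1..j - 1}"
    have c1: "tn i \<le> a" using tnia i by auto
    have c2: "tn (i - 1) \<le> a" using tnia[of "i - 1"] i by auto
    have "((\<lambda>t. rl_kernel \<alpha> (t - tn i) - rl_kernel \<alpha> (t - tn (i - 1))) has_integral
        ((Om \<alpha> (b - tn i) - Om \<alpha> (a - tn i)) - (Om \<alpha> (b - tn (i - 1)) - Om \<alpha> (a - tn (i - 1))))) {a..b}"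
      by (intro has_integral_diff kernel_has_integral[OF \<alpha>(1)] c1 c2) (use ab in auto)
    then show "((\<lambda>t. M i * (rl_kernel \<alpha> (t - tn i) - rl_kernel \<alpha> (t - tn (i - 1)))) has_integral
        M i * Kc \<alpha> tn i j) {a..b}"
      unfolding Kc_def a_def b_def by (rule has_integral_mult_right)
  qed
  have pw: "\<bar>f t\<bar> \<le> M j * (L t + H t)" if t: "t \<in> {a<..<b} - N0" for t
  proof -
    define e where "e = w t"
    have ne: "norm e \<le> M j" unfolding e_def using Mb[of j t] t j unfolding a_def b_def by auto
    have LH: "0 \<le> L t + H t" using Lnn Hnn[of t] t by auto
    show ?thesis
    proof (cases "(\<lambda>s. rl_kernel \<alpha> (t - s) *\<^sub>R w' s) integrable_on {0..t}")
      case False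
      then have "rl_int \<alpha> w' t = 0" unfolding rl_int_def by (simp add: not_integrable_integral)
      then show ?thesis unfolding f_def using LH Mnn[of j] by simp
    next
      case True
      define \<rho> where "\<rho> s = rl_kernel \<alpha> (t - s) * inner e (w' s)" for s
      have hv: "((\<lambda>s. rl_kernel \<alpha> (t - s) *\<^sub>R w' s) has_integral rl_int \<alpha> w' t) {0..t}"
        unfolding rl_int_def using True by (rule integrable_integral)
      have h\<rho>: "(\<rho> has_integral inner e (rl_int \<alpha> w' t)) {0..t}"
        using has_integral_linear[OF hv bounded_linear_inner_right[of e]]
        unfolding \<rho>_def by (simp add: o_def)
      have fe: "f t = integral {0..t} \<rho>" unfolding f_def e_def using integral_unique[OF h\<rho>] by (simp add: e_def)
      have i\<rho>: "\<rho> integrable_on {0..t}" using h\<rho> by blast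
      have split: "integral {0..a} \<rho> + integral {a..t} \<rho> = integral {0..t} \<rho>"
        by (rule Henstock_Kurzweil_Integration.integral_combine[OF a0 _ i\<rho>]) (use t in auto)
      have loc: "\<bar>integral {a..t} \<rho>\<bar> \<le> norm e * L t"
      proof -
        have ig: "(\<lambda>s. rl_kernel \<alpha> (t - s) * g s) integrable_on {a..t}" using N0(2) t by blast
        have "norm (integral {a..t} \<rho>) \<le> integral {a..t} (\<lambda>s. norm e * (rl_kernel \<alpha> (t - s) * g s))"
        proof (rule integral_norm_bound_integral)
          show "\<rho> integrable_on {a..t}"
            by (rule integrable_subinterval_real[OF i\<rho>]) (use a0 in auto)
          show "(\<lambda>s. norm e * (rl_kernel \<alpha> (t - s) * g s)) integrable_on {a..t}"
            using integrable_cmul[OF ig, of "norm e"] by simp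
          fix s assume s: "s \<in> {a..t}"
          have k0: "0 \<le> rl_kernel \<alpha> (t - s)" by (rule rl_kernel_nonneg[OF \<alpha>(1)])
          have "\<bar>inner e (w' s)\<bar> \<le> norm e * g s" unfolding g_def by (rule Cauchy_Schwarz_ineq2)
          then have "rl_kernel \<alpha> (t - s) * \<bar>inner e (w' s)\<bar> \<le> rl_kernel \<alpha> (t - s) * (norm e * g s)"
            using k0 by (rule mult_left_mono)
          then show "norm (\<rho> s) \<le> norm e * (rl_kernel \<alpha> (t - s) * g s)"
            unfolding \<rho>_def using k0 by (simp add: abs_mult mult_ac)
        qed
        also have "\<dots> = norm e * L t" unfolding L_def by simp
        finally show ?thesis by simp
      qed
      have hist: "\<bar>integral {0..a} \<rho>\<bar> \<le> norm e * H t"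
      proof -
        have i0a: "\<rho> integrable_on {tn 0..tn (j - 1)}"
          using integrable_subinterval_real[OF i\<rho>, of 0 a] t a0 tn0 unfolding a_def by auto
        have "integral {0..a} \<rho> = (\<Sum>i=1..j - 1. integral {tn (i - 1)..tn i} \<rho>)"
          using sum_intervals_real[of tn \<rho> "j - 1", OF monole i0a] tn0 unfolding a_def by simp
        also have "\<bar>\<dots>\<bar> \<le> (\<Sum>i=1..j - 1. \<bar>integral {tn (i - 1)..tn i} \<rho>\<bar>)" by (rule sum_abs)
        also have "\<dots> \<le> (\<Sum>i=1..j - 1. norm e * M i * (rl_kernel \<alpha> (t - tn i) - rl_kernel \<alpha> (t - tn (i - 1))))"
        proof (rule sum_mono)
          fix i assume i: "i \<in> {1..j - 1}"
          have lt: "tn (i - 1) < tn i" using mono[of "i - 1" i] i by auto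
          have ti: "tn i < t" using tnia[of i] i t by auto
          have sub: "{tn (i - 1)..tn i} \<subseteq> {0..tn j}"
            using monole[of 0 "i - 1"] monole[of i j] tn0 i by auto
          show "\<bar>integral {tn (i - 1)..tn i} \<rho>\<bar> \<le> norm e * M i * (rl_kernel \<alpha> (t - tn i) - rl_kernel \<alpha> (t - tn (i - 1)))"
            unfolding \<rho>_def
          proof (rule hist_bound(2)[OF \<alpha> lt ti])
            show "continuous_on {tn (i - 1)..tn i} (\<lambda>s. inner e (w s))"
              by (intro continuous_intros continuous_on_subset[OF cw sub])
            show "inner e (w (tn (i - 1))) = 0" using wz[of "i - 1"] i by auto
            show "inner e (w (tn i)) = 0" using wz[of i] i by auto
            fix s assume s: "s \<in> {tn (i - 1)<..<tn i}"
            have "(w has_vector_derivative w' s) (at s)" using dw[of i s] i s by auto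
            then have "((\<lambda>s. inner e (w s)) has_derivative (\<lambda>h. inner e (h *\<^sub>R w' s))) (at s)"
              unfolding has_vector_derivative_def by (rule has_derivative_inner_right)
            then have "((\<lambda>s. inner e (w s)) has_derivative (\<lambda>h. inner e (w' s) * h)) (at s)"
              by (simp add: mult.commute)
            then show "((\<lambda>s. inner e (w s)) has_real_derivative inner e (w' s)) (at s)"
              by (simp add: has_field_derivative_def)
          next
            fix s assume s: "s \<in> {tn (i - 1)..tn i}"
            have "\<bar>inner e (w s)\<bar> \<le> norm e * norm (w s)" by (rule Cauchy_Schwarz_ineq2)
            also have "\<dots> \<le> norm e * M i"
              using Mb[of i s] i s j by (intro mult_left_mono) auto
            finally show "\<bar>inner e (w s)\<bar> \<le> norm e * M i" .
          qed
        qed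
        also have "\<dots> = norm e * H t" unfolding H_def by (simp add: sum_distrib_left mult_ac)
        finally show ?thesis .
      qed
      have "\<bar>f t\<bar> \<le> norm e * (L t + H t)"
        using fe split loc hist by (simp add: algebra_simps)
      also have "\<dots> \<le> M j * (L t + H t)" using ne LH by (rule mult_right_mono)
      finally show ?thesis .
    qed
  qed
  define h where "h t = M j * (L t + H t)" for t
  have hh: "(h has_integral M j * (integral {a..b} L + (\<Sum>i=1..j - 1. M i * Kc \<alpha> tn i j))) {a..b}"
    unfolding h_def
    by (intro has_integral_mult_right has_integral_add Hint integrable_integral)
       (use N0(3) in \<open>simp add: L_def\<close>)
  have hf: "(f has_integral integral {a..b} f) {a..b}"
    using fi unfolding f_def a_def b_def by (rule integrable_integral)
  define f2 where "f2 t = (if t \<in> N0 \<union> {a, b} then 0 else f t)" for t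
  have hf2: "(f2 has_integral integral {a..b} f) {a..b}"
    by (rule has_integral_spike[OF _ _ hf, of "N0 \<union> {a, b}"]) (use N0(1) in \<open>auto simp: f2_def\<close>)
  define h2 where "h2 t = (if t = a then 0 else h t)" for t
  have hh2: "(h2 has_integral M j * (integral {a..b} L + (\<Sum>i=1..j - 1. M i * Kc \<alpha> tn i j))) {a..b}"
    by (rule has_integral_spike[OF _ _ hh, of "{a}"]) (auto simp: h2_def)
  have "\<bar>integral {a..b} f\<bar> \<le> integral {a..b} h2"
  proof -
    have "norm (integral {a..b} f2) \<le> integral {a..b} h2"
    proof (rule integral_norm_bound_integral)
      show "f2 integrable_on {a..b}" using hf2 by blast
      show "h2 integrable_on {a..b}" using hh2 by blast
      fix t assume t: "t \<in> {a..b}"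
      show "norm (f2 t) \<le> h2 t"
      proof (cases "t \<in> N0 \<union> {a, b}")
        case True
        then show ?thesis unfolding f2_def h2_def h_def
          using Lnn[of t] Hnn[of t] t Mnn[of j] by (cases "t = a") auto
      next
        case False
        then show ?thesis unfolding f2_def h2_def h_def using pw[of t] t by auto
      qed
    qed
    then show ?thesis using integral_unique[OF hf2] by simp
  qed
  also have "\<dots> = M j * (integral {a..b} L + (\<Sum>i=1..j - 1. M i * Kc \<alpha> tn i j))"
    using integral_unique[OF hh2] .
  also have "\<dots> \<le> M j * (Om \<alpha> (b - a) * integral {a..b} g + (\<Sum>i=1..j - 1. M i * Kc \<alpha> tn i j))"
    using N0(4) Mnn[of j] unfolding L_def by (intro mult_left_mono) auto
  finally show ?thesis unfolding f_def g_def a_def b_def .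
qed



lemma Kc_nonneg:
  assumes \<alpha>: "0 < \<alpha>" "\<alpha> < 1" and mono: "\<And>i j. i < j \<Longrightarrow> tn i < tn j"
    and i: "1 \<le> i" "i < j"
  shows "0 \<le> Kc \<alpha> tn i j"
proof -
  have monole: "tn i' \<le> tn k" if "i' \<le> k" for i' k
    using mono[of i' k] that by (cases "i' = k") auto
  define a where "a = tn (j - 1)"
  define b where "b = tn j"
  have ab: "a \<le> b" unfolding a_def b_def by (rule monole) simp
  have c1: "tn i \<le> a" unfolding a_def using i by (intro monole) simp
  have c2: "tn (i - 1) \<le> a" unfolding a_def using i by (intro monole) simp
  have "((\<lambda>t. rl_kernel \<alpha> (t - tn i) - rl_kernel \<alpha> (t - tn (i - 1))) has_integral
        ((Om \<alpha> (b - tn i) - Om \<alpha> (a - tn i)) - (Om \<alpha> (b - tn (i - 1)) - Om \<alpha> (a - tn (i - 1))))) {a..b}"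
    by (intro has_integral_diff kernel_has_integral[OF \<alpha>(1)] c1 c2 ab)
  then have hi: "((\<lambda>t. rl_kernel \<alpha> (t - tn i) - rl_kernel \<alpha> (t - tn (i - 1))) has_integral Kc \<alpha> tn i j) {a..b}"
    unfolding Kc_def a_def b_def .
  have "tn (i - 1) < tn i" using mono[of "i - 1" i] i by simp
  have hi2: "((\<lambda>t. if t = tn i then 0 else rl_kernel \<alpha> (t - tn i) - rl_kernel \<alpha> (t - tn (i - 1)))
      has_integral Kc \<alpha> tn i j) {a..b}"
    by (rule has_integral_spike[OF _ _ hi, of "{tn i}"]) auto
  have nn: "0 \<le> (if t = tn i then 0 else rl_kernel \<alpha> (t - tn i) - rl_kernel \<alpha> (t - tn (i - 1)))"
    if "t \<in> {a..b}" for t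
  proof (cases "t = tn i")
    case True
    then show ?thesis by simp
  next
    case False
    then have "0 < t - tn i" using that c1 by auto
    then show ?thesis using rl_kernel_antimono[OF \<alpha>, of "t - tn i" "t - tn (i - 1)"] \<open>tn (i - 1) < tn i\<close> False
      by simp
  qed
  show ?thesis by (rule has_integral_nonneg[OF hi2 nn])
qed

lemma algebra_bound:
  fixes M G :: "nat \<Rightarrow> real" and tn :: "nat \<Rightarrow> real"
  assumes \<alpha>: "0 < \<alpha>" "\<alpha> < 1" and mono: "\<And>i j. i < j \<Longrightarrow> tn i < tn j"
    and Mnn: "\<And>i. 0 \<le> M i" and Gnn: "\<And>i. 0 \<le> G i"
  shows "(\<Sum>j=1..N. M j * (Om \<alpha> (tn j - tn (j - 1)) * G j + (\<Sum>i=1..j - 1. M i * Kc \<alpha> tn i j)))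
     \<le> 3 / 2 * (\<Sum>j=1..N. Om \<alpha> (tn j - tn (j - 1)) * ((G j)\<^sup>2 + (M j)\<^sup>2))"
proof -
  have monole: "tn i' \<le> tn k" if "i' \<le> k" for i' k
    using mono[of i' k] that by (cases "i' = k") auto
  define Ow where "Ow j = Om \<alpha> (tn j - tn (j - 1))" for j
  have Onn: "0 \<le> Ow j" for j unfolding Ow_def by (rule Om_nonneg[OF \<alpha>(1)])
  have A: "M j * (Ow j * G j) \<le> Ow j * ((G j)\<^sup>2 + (M j)\<^sup>2) / 2" for j
  proof -
    have "2 * (M j * G j) \<le> (G j)\<^sup>2 + (M j)\<^sup>2"
      using sum_squares_bound[of "M j" "G j"] by (simp add: algebra_simps power2_eq_square)
    then have "Ow j * (2 * (M j * G j)) \<le> Ow j * ((G j)\<^sup>2 + (M j)\<^sup>2)"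
      using Onn[of j] by (rule mult_left_mono)
    then show ?thesis by (simp add: algebra_simps)
  qed
  have B: "M j * (M i * Kc \<alpha> tn i j) \<le> Kc \<alpha> tn i j * (M j)\<^sup>2 / 2 + Kc \<alpha> tn i j * (M i)\<^sup>2 / 2"
    if "1 \<le> i" "i < j" for i j
  proof -
    have K: "0 \<le> Kc \<alpha> tn i j" by (rule Kc_nonneg[OF \<alpha> mono that])
    have "2 * (M j * M i) \<le> (M j)\<^sup>2 + (M i)\<^sup>2"
      using sum_squares_bound[of "M j" "M i"] by (simp add: algebra_simps power2_eq_square)
    then have "Kc \<alpha> tn i j * (2 * (M j * M i)) \<le> Kc \<alpha> tn i j * ((M j)\<^sup>2 + (M i)\<^sup>2)"
      using K by (rule mult_left_mono)
    then show ?thesis by (simp add: algebra_simps)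
  qed
  have S1: "(\<Sum>i=1..j - 1. Kc \<alpha> tn i j) \<le> Ow j" if "1 \<le> j" for j
  proof -
    define P where "P i = Om \<alpha> (tn j - tn i) - Om \<alpha> (tn (j - 1) - tn i)" for i
    have "(\<Sum>i=1..j - 1. Kc \<alpha> tn i j) = (\<Sum>i=1..j - 1. P i - P (i - 1))"
      unfolding P_def Kc_def by simp
    also have "\<dots> = P (j - 1) - P 0" by (rule telescope1)
    also have "\<dots> \<le> Ow j"
      unfolding P_def Ow_def using Om_mono[OF \<alpha>(1), of "tn (j - 1) - tn 0" "tn j - tn 0"]
        monole[of 0 "j - 1"] monole[of "j - 1" j] that by simp
    finally show ?thesis .
  qed
  have S2: "(\<Sum>j=Suc i..N. Kc \<alpha> tn i j) \<le> Ow i" if "1 \<le> i" "i \<le> N" for i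
  proof -
    define Q where "Q j = Om \<alpha> (tn j - tn i) - Om \<alpha> (tn j - tn (i - 1))" for j
    have "(\<Sum>j=Suc i..N. Kc \<alpha> tn i j) = (\<Sum>j=Suc i..N. Q j - Q (j - 1))"
      unfolding Q_def Kc_def by (simp add: algebra_simps)
    also have "\<dots> = Q N - Q i" by (rule telescope2[OF that(2)])
    also have "\<dots> \<le> Ow i"
      unfolding Q_def Ow_def using Om_mono[OF \<alpha>(1), of "tn N - tn i" "tn N - tn (i - 1)"]
        monole[of "i - 1" i] monole[of i N] that by simp
    finally show ?thesis .
  qed
  have swap: "(\<Sum>j=1..N. \<Sum>i=1..j - 1. Kc \<alpha> tn i j * (M i)\<^sup>2 / 2)
      = (\<Sum>i=1..N. \<Sum>j=Suc i..N. Kc \<alpha> tn i j * (M i)\<^sup>2 / 2)"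
  proof -
    have "(\<Sum>j=1..N. \<Sum>i=1..j - 1. Kc \<alpha> tn i j * (M i)\<^sup>2 / 2)
        = (\<Sum>j\<in>{1..N}. \<Sum>i\<in>{i. i \<in> {1..N} \<and> i < j}. Kc \<alpha> tn i j * (M i)\<^sup>2 / 2)"
      by (rule sum.cong[OF refl], rule sum.cong) auto
    also have "\<dots> = (\<Sum>i\<in>{1..N}. \<Sum>j\<in>{j. j \<in> {1..N} \<and> i < j}. Kc \<alpha> tn i j * (M i)\<^sup>2 / 2)"
      by (rule sum.swap_restrict) auto
    also have "\<dots> = (\<Sum>i=1..N. \<Sum>j=Suc i..N. Kc \<alpha> tn i j * (M i)\<^sup>2 / 2)"
      by (rule sum.cong[OF refl], rule sum.cong) auto
    finally show ?thesis .
  qed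
  have "(\<Sum>j=1..N. M j * (Ow j * G j + (\<Sum>i=1..j - 1. M i * Kc \<alpha> tn i j)))
      = (\<Sum>j=1..N. M j * (Ow j * G j)) + (\<Sum>j=1..N. \<Sum>i=1..j - 1. M j * (M i * Kc \<alpha> tn i j))"
    by (simp add: algebra_simps sum.distrib sum_distrib_left)
  also have "\<dots> \<le> (\<Sum>j=1..N. Ow j * ((G j)\<^sup>2 + (M j)\<^sup>2) / 2)
      + (\<Sum>j=1..N. \<Sum>i=1..j - 1. Kc \<alpha> tn i j * (M j)\<^sup>2 / 2 + Kc \<alpha> tn i j * (M i)\<^sup>2 / 2)"
    by (intro add_mono sum_mono A B) auto
  also have "(\<Sum>j=1..N. \<Sum>i=1..j - 1. Kc \<alpha> tn i j * (M j)\<^sup>2 / 2 + Kc \<alpha> tn i j * (M i)\<^sup>2 / 2)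
      = (\<Sum>j=1..N. \<Sum>i=1..j - 1. Kc \<alpha> tn i j * (M j)\<^sup>2 / 2)
        + (\<Sum>j=1..N. \<Sum>i=1..j - 1. Kc \<alpha> tn i j * (M i)\<^sup>2 / 2)"
    by (simp only: sum.distrib)
  also have "\<dots> = (\<Sum>j=1..N. (\<Sum>i=1..j - 1. Kc \<alpha> tn i j) * (M j)\<^sup>2 / 2)
        + (\<Sum>i=1..N. (\<Sum>j=Suc i..N. Kc \<alpha> tn i j) * (M i)\<^sup>2 / 2)"
    unfolding swap by (simp only: sum_distrib_right sum_divide_distrib)
  also have "\<dots> \<le> (\<Sum>j=1..N. Ow j * (M j)\<^sup>2 / 2) + (\<Sum>i=1..N. Ow i * (M i)\<^sup>2 / 2)"
    by (intro add_mono sum_mono divide_right_mono mult_right_mono S1 S2) auto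
  also have "(\<Sum>j=1..N. Ow j * ((G j)\<^sup>2 + (M j)\<^sup>2) / 2) + ((\<Sum>j=1..N. Ow j * (M j)\<^sup>2 / 2) + (\<Sum>i=1..N. Ow i * (M i)\<^sup>2 / 2))
      \<le> 3 / 2 * (\<Sum>j=1..N. Ow j * ((G j)\<^sup>2 + (M j)\<^sup>2))"
  proof -
    have "(\<Sum>j=1..N. Ow j * ((G j)\<^sup>2 + (M j)\<^sup>2) / 2) + ((\<Sum>j=1..N. Ow j * (M j)\<^sup>2 / 2) + (\<Sum>i=1..N. Ow i * (M i)\<^sup>2 / 2))
        = (\<Sum>j=1..N. Ow j * ((G j)\<^sup>2 / 2 + 3 / 2 * (M j)\<^sup>2))"
      by (simp only: sum.distrib[symmetric]) (rule sum.cong[OF refl], simp add: field_simps)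
    also have "\<dots> \<le> (\<Sum>j=1..N. 3 / 2 * (Ow j * ((G j)\<^sup>2 + (M j)\<^sup>2)))"
      by (intro sum_mono) (use Onn in \<open>auto intro!: mult_left_mono simp: algebra_simps\<close>)
    finally show ?thesis by (simp add: sum_distrib_left)
  qed
  finally show ?thesis unfolding Ow_def by simp
qed



lemma Gamma_half_bound:
  fixes \<alpha> :: real
  assumes "0 < \<alpha>" "\<alpha> < 1"
  shows "1 / 2 \<le> \<alpha> * Gamma \<alpha>"
proof -
  have nz1: "\<alpha> \<notin> \<int>\<^sub>\<le>\<^sub>0" using nonpos_Ints_nonpos[of \<alpha>] assms by force
  have nz2: "\<alpha> + 1 \<notin> \<int>\<^sub>\<le>\<^sub>0" using nonpos_Ints_nonpos[of "\<alpha> + 1"] assms by force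
  have e1: "\<alpha> * Gamma \<alpha> = Gamma (\<alpha> + 1)" using Gamma_plus1[OF nz1] by simp
  have e2: "Gamma (\<alpha> + 2) = (\<alpha> + 1) * Gamma (\<alpha> + 1)"
    using Gamma_plus1[OF nz2] by (simp add: add.assoc)
  have g2: "Gamma (2::real) = 1"
    using Gamma_fact[of 1] by (simp add: numeral_2_eq_2)
  have "Gamma (2::real) < Gamma (\<alpha> + 2)" by (rule Gamma_real_strict_mono) (use assms in auto)
  then have "1 < (\<alpha> + 1) * Gamma (\<alpha> + 1)" using e2 g2 by simp
  moreover have "Gamma (\<alpha> + 1) > 0" using assms by (simp add: Gamma_real_pos)
  moreover have "(\<alpha> + 1) * Gamma (\<alpha> + 1) \<le> 2 * Gamma (\<alpha> + 1)"
    by (rule mult_right_mono) (use assms \<open>Gamma (\<alpha> + 1) > 0\<close> in auto)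
  ultimately have "1 < 2 * Gamma (\<alpha> + 1)" by linarith
  then show ?thesis using e1 by simp
qed

lemma Om_le:
  assumes "0 < \<alpha>" "\<alpha> < 1"
  shows "Om \<alpha> x \<le> 2 * x powr \<alpha>"
proof -
  have h: "1 / 2 \<le> \<alpha> * Gamma \<alpha>" by (rule Gamma_half_bound[OF assms])
  have "Om \<alpha> x = x powr \<alpha> / (\<alpha> * Gamma \<alpha>)" unfolding Om_def ..
  also have "\<dots> \<le> x powr \<alpha> / (1 / 2)"
    by (rule divide_left_mono[OF h]) (use h in auto)
  finally show ?thesis by simp
qed

lemma core:
  fixes w w' :: "real \<Rightarrow> 'a::real_inner" and tn :: "nat \<Rightarrow> real"
  assumes \<alpha>: "0 < \<alpha>" "\<alpha> < 1" and N: "1 \<le> N" and mono: "\<And>i j. i < j \<Longrightarrow> tn i < tn j"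
    and tn0: "tn 0 = 0"
    and cw: "continuous_on {0..tn N} w" and wz: "\<And>j. j \<le> N \<Longrightarrow> w (tn j) = 0"
    and dw: "\<forall>j\<in>{1..N}. \<forall>t\<in>{tn (j - 1)<..<tn j}. (w has_vector_derivative w' t) (at t)"
    and gi: "(\<lambda>t. norm (w' t)) integrable_on {0..tn N}"
  shows "\<bar>prim (\<lambda>t. inner (w t) (rl_int \<alpha> w' t)) (tn N)\<bar>
     \<le> 3 * (\<Sum>j=1..N. (tn j - tn (j - 1)) powr \<alpha> *
            ((integral {tn (j - 1)..tn j} (\<lambda>t. norm (w' t)))\<^sup>2
             + (SUP t\<in>{tn (j - 1)<..<tn j}. norm (w t))\<^sup>2))"
proof -
  have monole: "tn i' \<le> tn k" if "i' \<le> k" for i' k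
    using mono[of i' k] that by (cases "i' = k") auto
  have "bounded (w ` {0..tn N})"
    by (rule compact_imp_bounded[OF compact_continuous_image[OF cw compact_Icc]])
  then obtain B where B: "\<And>s. s \<in> {0..tn N} \<Longrightarrow> norm (w s) \<le> B"
    unfolding bounded_iff by blast
  define S where "S j = (SUP t\<in>{tn (j - 1)<..<tn j}. norm (w t))" for j
  define M where "M j = (if 1 \<le> j \<and> j \<le> N then S j else 0)" for j
  define G where "G j = integral {tn (j - 1)..tn j} (\<lambda>t. norm (w' t))" for j
  have Sprop: "norm (w s) \<le> S i \<and> 0 \<le> S i" if i: "1 \<le> i" "i \<le> N" and s: "s \<in> {tn (i - 1)..tn i}" for i s
  proof -
    have sub: "{tn (i - 1)<..<tn i} \<subseteq> {0..tn N}"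
      using monole[of 0 "i - 1"] monole[of i N] tn0 i by auto
    have bdd: "bdd_above ((\<lambda>t. norm (w t)) ` {tn (i - 1)<..<tn i})"
      by (rule bdd_aboveI2[of _ _ B]) (use B sub in auto)
    have lt: "tn (i - 1) < tn i" using mono[of "i - 1" i] i by simp
    define m where "m = (tn (i - 1) + tn i) / 2"
    have m: "m \<in> {tn (i - 1)<..<tn i}" unfolding m_def using lt by auto
    have S0: "0 \<le> S i" unfolding S_def
      using cSUP_upper[OF m bdd] norm_ge_zero[of "w m"] by linarith
    show ?thesis
    proof (cases "s = tn (i - 1) \<or> s = tn i")
      case True
      then have "w s = 0" using wz[of "i - 1"] wz[of i] i by auto
      then show ?thesis using S0 by simp
    next
      case False
      then have "s \<in> {tn (i - 1)<..<tn i}" using s by auto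
      then show ?thesis using S0 cSUP_upper[OF _ bdd] unfolding S_def by auto
    qed
  qed
  have Mnn: "0 \<le> M i" for i unfolding M_def using Sprop[of i "tn i"] monole[of "i - 1" i] by auto
  have Gnn: "0 \<le> G i" for i unfolding G_def by (rule integral_nonneg_any) simp
  define f where "f t = inner (w t) (rl_int \<alpha> w' t)" for t
  have RHSnn: "0 \<le> (\<Sum>j=1..N. (tn j - tn (j - 1)) powr \<alpha> * ((G j)\<^sup>2 + (S j)\<^sup>2))"
    by (intro sum_nonneg mult_nonneg_nonneg) auto
  have main: "\<bar>prim f (tn N)\<bar> \<le> 3 * (\<Sum>j=1..N. (tn j - tn (j - 1)) powr \<alpha> * ((G j)\<^sup>2 + (S j)\<^sup>2))"
  proof (cases "f integrable_on {0..tn N}")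
    case False
    then have "prim f (tn N) = 0" unfolding prim_def by (simp add: not_integrable_integral)
    then show ?thesis using RHSnn by simp
  next
    case True
    have "prim f (tn N) = (\<Sum>j=1..N. integral {tn (j - 1)..tn j} f)"
      unfolding prim_def using sum_intervals_real[of tn f N, OF monole] True tn0 by simp
    also have "\<bar>\<dots>\<bar> \<le> (\<Sum>j=1..N. \<bar>integral {tn (j - 1)..tn j} f\<bar>)" by (rule sum_abs)
    also have "\<dots> \<le> (\<Sum>j=1..N. M j * (Om \<alpha> (tn j - tn (j - 1)) * G j + (\<Sum>i=1..j - 1. M i * Kc \<alpha> tn i j)))"
    proof (rule sum_mono)
      fix j assume j: "j \<in> {1..N}"
      have sub: "{tn (j - 1)..tn j} \<subseteq> {0..tn N}"
        using monole[of 0 "j - 1"] monole[of j N] tn0 j by auto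
      show "\<bar>integral {tn (j - 1)..tn j} f\<bar>
          \<le> M j * (Om \<alpha> (tn j - tn (j - 1)) * G j + (\<Sum>i=1..j - 1. M i * Kc \<alpha> tn i j))"
        unfolding f_def G_def
      proof (rule interval_bound[where tn=tn and j=j and w=w and w'=w' and M=M, OF \<alpha> mono tn0])
        show "1 \<le> j" using j by simp
        show "continuous_on {0..tn j} w"
          by (rule continuous_on_subset[OF cw]) (use monole[of j N] j in auto)
        show "w (tn i) = 0" if "i \<le> j" for i using wz[of i] that j by simp
        show "(w has_vector_derivative w' t) (at t)"
          if "1 \<le> i" "i < j" "t \<in> {tn (i - 1)<..<tn i}" for i t
        proof -
          have "i \<in> {1..N}" using that j by auto
          then show ?thesis using dw[rule_format, of i t] that by blast
        qed
        show "norm (w s) \<le> M i" if "1 \<le> i" "i \<le> j" "s \<in> {tn (i - 1)..tn i}" for i s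
          using Sprop[of i s] that j unfolding M_def by auto
        show "0 \<le> M i" for i by (rule Mnn)
        show "(\<lambda>s. norm (w' s)) integrable_on {tn (j - 1)..tn j}"
          by (rule integrable_subinterval_real[OF gi sub])
        show "(\<lambda>t. inner (w t) (rl_int \<alpha> w' t)) integrable_on {tn (j - 1)..tn j}"
          using integrable_subinterval_real[OF True sub] unfolding f_def .
      qed
    qed
    also have "\<dots> \<le> 3 / 2 * (\<Sum>j=1..N. Om \<alpha> (tn j - tn (j - 1)) * ((G j)\<^sup>2 + (M j)\<^sup>2))"
      by (rule algebra_bound[OF \<alpha> mono Mnn Gnn])
    also have "\<dots> \<le> 3 / 2 * (\<Sum>j=1..N. 2 * (tn j - tn (j - 1)) powr \<alpha> * ((G j)\<^sup>2 + (S j)\<^sup>2))"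
    proof (intro mult_left_mono sum_mono)
      fix j assume j: "j \<in> {1..N}"
      then have MS: "M j = S j" unfolding M_def by simp
      have nn: "0 \<le> (G j)\<^sup>2 + (S j)\<^sup>2" by simp
      show "Om \<alpha> (tn j - tn (j - 1)) * ((G j)\<^sup>2 + (M j)\<^sup>2)
          \<le> 2 * (tn j - tn (j - 1)) powr \<alpha> * ((G j)\<^sup>2 + (S j)\<^sup>2)"
        unfolding MS using mult_right_mono[OF Om_le[OF \<alpha>, of "tn j - tn (j - 1)"] nn] .
    qed simp
    also have "\<dots> = 3 * (\<Sum>j=1..N. (tn j - tn (j - 1)) powr \<alpha> * ((G j)\<^sup>2 + (S j)\<^sup>2))"
      by (simp add: sum_distrib_left mult_ac)
    finally show ?thesis .
  qed
  then show ?thesis unfolding f_def G_def S_def .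
qed



lemma mesh_props:
  assumes T: "T > 0" and g: "\<gamma> \<ge> 1" and N: "1 \<le> N"
  shows "\<And>i j. i < j \<Longrightarrow> mesh T \<gamma> N i < mesh T \<gamma> N j"
    and "mesh T \<gamma> N 0 = 0"
    and "mesh T \<gamma> N N = T"
proof -
  define h where "h = T powr (1 / \<gamma>) / real N"
  have h: "h > 0" unfolding h_def using T N by simp
  show "mesh T \<gamma> N i < mesh T \<gamma> N j" if "i < j" for i j
    unfolding mesh_def h_def[symmetric]
    by (rule powr_less_mono2) (use g h that in auto)
  show "mesh T \<gamma> N 0 = 0" unfolding mesh_def by simp
  have "real N * (T powr (1 / \<gamma>) / real N) = T powr (1 / \<gamma>)" using N by simp
  then show "mesh T \<gamma> N N = T" unfolding mesh_def using T g by (simp add: powr_powr)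
qed

lemma pl_interp_node:
  fixes tn :: "nat \<Rightarrow> real" and y :: "real \<Rightarrow> 'a::real_vector"
  assumes mono: "\<And>i j. i < j \<Longrightarrow> tn i < tn j"
  shows "pl_interp tn y (tn k) = y (tn k)"
proof (cases "k = 0")
  case True
  have L: "(LEAST j. 1 \<le> j \<and> tn k \<le> tn j) = 1"
    by (rule Least_equality) (use True mono[of 0 1] in auto)
  show ?thesis unfolding pl_interp_def Let_def L using True by simp
next
  case False
  have L: "(LEAST j. 1 \<le> j \<and> tn k \<le> tn j) = k"
  proof (rule Least_equality)
    show "1 \<le> k \<and> tn k \<le> tn k" using False by simp
    fix j assume "1 \<le> j \<and> tn k \<le> tn j"
    then show "k \<le> j" using mono[of j k] by (cases "j < k") auto
  qed
  have ne: "tn k - tn (k - 1) \<noteq> 0" using mono[of "k - 1" k] False by simp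
  show ?thesis unfolding pl_interp_def Let_def L using ne by simp
qed

theorem lemma4p4:
  fixes A :: "'a::{real_inner,complete_space} \<Rightarrow> 'a" and T \<gamma> :: real
  assumes "linear A" and "T > 0" and "\<gamma> \<ge> 1"
  shows "\<exists>C. \<forall>(\<alpha>::real) (N::nat) (\<phi>::real \<Rightarrow> 'a).
     0 < \<alpha> \<longrightarrow> \<alpha> < 1 \<longrightarrow> 1 \<le> N \<longrightarrow>
     continuous_on {0..T} \<phi> \<longrightarrow> \<phi> T = 0 \<longrightarrow>
     (let tn = mesh T \<gamma> N;
          Y = Yerr T \<gamma> N \<phi>;
          AY = (\<lambda>t. A (Y t));
          AY' = (\<lambda>t. A (vector_derivative Y (at t)))
      in continuous_on {0..T} AY \<longrightarrow>
         (\<forall>j\<in>{1..N}. \<forall>t\<in>{tn (j - 1)<..<tn j}. (AY has_vector_derivative AY' t) (at t)) \<longrightarrow>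
         AY' integrable_on {0..T} \<longrightarrow> (\<lambda>t. norm (AY' t)) integrable_on {0..T} \<longrightarrow>
         \<bar>prim (\<lambda>t. inner (AY t) (rl_int \<alpha> AY' t)) T\<bar>
           \<le> C * (\<Sum>j=1..N. (tn j - tn (j - 1)) powr \<alpha> *
                 ((integral {tn (j - 1)..tn j} (\<lambda>t. norm (AY' t)))\<^sup>2
                  + (SUP t\<in>{tn (j - 1)<..<tn j}. norm (AY t))\<^sup>2)))"
proof (intro exI[of _ 3] allI impI)
  fix \<alpha> :: real and N :: nat and \<phi> :: "real \<Rightarrow> 'a"
  assume \<alpha>: "0 < \<alpha>" "\<alpha> < 1" and N: "1 \<le> N"
  define tn where "tn = mesh T \<gamma> N"
  define w where "w t = A (Yerr T \<gamma> N \<phi> t)" for t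
  define w' where "w' t = A (vector_derivative (Yerr T \<gamma> N \<phi>) (at t))" for t
  have mono: "\<And>i j. i < j \<Longrightarrow> tn i < tn j" and tn0: "tn 0 = 0" and tnN: "tn N = T"
    using mesh_props[OF assms(2,3) N] unfolding tn_def by auto
  have wz: "w (tn j) = 0" for j
  proof -
    have p: "pl_interp tn (ycum \<phi>) (tn j) = ycum \<phi> (tn j)" by (rule pl_interp_node[OF mono])
    have "Yerr T \<gamma> N \<phi> (tn j) = 0"
      unfolding Yerr_def using p unfolding tn_def by simp
    then show ?thesis unfolding w_def using linear_0[OF assms(1)] by simp
  qed
  show "let tn = mesh T \<gamma> N;
          Y = Yerr T \<gamma> N \<phi>;
          AY = (\<lambda>t. A (Y t));
          AY' = (\<lambda>t. A (vector_derivative Y (at t)))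
      in continuous_on {0..T} AY \<longrightarrow>
         (\<forall>j\<in>{1..N}. \<forall>t\<in>{tn (j - 1)<..<tn j}. (AY has_vector_derivative AY' t) (at t)) \<longrightarrow>
         AY' integrable_on {0..T} \<longrightarrow> (\<lambda>t. norm (AY' t)) integrable_on {0..T} \<longrightarrow>
         \<bar>prim (\<lambda>t. inner (AY t) (rl_int \<alpha> AY' t)) T\<bar>
           \<le> 3 * (\<Sum>j=1..N. (tn j - tn (j - 1)) powr \<alpha> *
                 ((integral {tn (j - 1)..tn j} (\<lambda>t. norm (AY' t)))\<^sup>2
                  + (SUP t\<in>{tn (j - 1)<..<tn j}. norm (AY t))\<^sup>2))"
    unfolding Let_def tn_def[symmetric] w_def[symmetric] w'_def[symmetric]
  proof (intro impI)
    assume cw: "continuous_on {0..T} w"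
      and dw: "\<forall>j\<in>{1..N}. \<forall>t\<in>{tn (j - 1)<..<tn j}. (w has_vector_derivative w' t) (at t)"
      and gi: "(\<lambda>t. norm (w' t)) integrable_on {0..T}"
    show "\<bar>prim (\<lambda>t. inner (w t) (rl_int \<alpha> w' t)) T\<bar>
           \<le> 3 * (\<Sum>j=1..N. (tn j - tn (j - 1)) powr \<alpha> *
                 ((integral {tn (j - 1)..tn j} (\<lambda>t. norm (w' t)))\<^sup>2
                  + (SUP t\<in>{tn (j - 1)<..<tn j}. norm (w t))\<^sup>2))"
      using core[where tn=tn and w=w and w'=w' and N=N and \<alpha>=\<alpha>, OF \<alpha> N mono tn0] cw dw gi wz unfolding tnN by blast
  qed
qed


end
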